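(* Let $p\ge 5$ be a prime with $p\equiv 1\pmod 6$, and regard $r$ as an indeterminate. Let $\tilde c_1(r),\tilde c_2(r),\tilde c_3(r)\in\mathbb F_p[r]$ be the coefficients of $x^{2p-2}y^{p-1}z^{p-1}$, $x^{p-1}y^{2p-2}z^{p-1}$ and $x^{p-1}y^{p-1}z^{2p-2}$ in $(x^3z+y^4+ry^2z^2+z^4)^{p-1}$. Then: \begin{enumerate} \item Modulo $p$, $\tilde c_3(r)$ is divisible by $\tilde c_1(r)$. \item The only roots of $\tilde c_2(r)$ (in an algebraic closure of $\mathbb F_p$) are $r=\pm 2$; hence $\tilde c_2(r)\neq 0$ for every other $r$ in an algebraic closure of $\mathbb F_p$. \end{enumerate} *)

theory Defs
  imports "HOL-Computational_Algebra.Polynomial" "HOL-Number_Theory.Cong"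
begin

text \<open>Polynomials in x, y, z with coefficients in Z[r], represented as nested
univariate polynomials: the outermost variable is z, then y, then x; the
innermost coefficient ring is int poly (the indeterminate r).\<close>

type_synonym mpoly = "int poly poly poly poly"

definition zv :: mpoly where "zv = monom 1 1"
definition yv :: mpoly where "yv = [: monom 1 1 :]"
definition xv :: mpoly where "xv = [: [: monom 1 1 :] :]"
definition rv :: mpoly where "rv = [: [: [: monom 1 1 :] :] :]"

definition Fpol :: mpoly where
  "Fpol = xv ^ 3 * zv + yv ^ 4 + rv * yv ^ 2 * zv ^ 2 + zv ^ 4"

definition mcoeff :: "mpoly \<Rightarrow> nat \<Rightarrow> nat \<Rightarrow> nat \<Rightarrow> int poly" where
  "mcoeff P i j k = coeff (coeff (coeff P k) j) i"

definition c1 :: "nat \<Rightarrow> int poly" where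
  "c1 p = mcoeff (Fpol ^ (p - 1)) (2*p - 2) (p - 1) (p - 1)"
definition c2 :: "nat \<Rightarrow> int poly" where
  "c2 p = mcoeff (Fpol ^ (p - 1)) (p - 1) (2*p - 2) (p - 1)"
definition c3 :: "nat \<Rightarrow> int poly" where
  "c3 p = mcoeff (Fpol ^ (p - 1)) (p - 1) (p - 1) (2*p - 2)"

end

theory Submission
  imports Defs
begin


definition mmono :: "int poly \<Rightarrow> nat \<Rightarrow> nat \<Rightarrow> nat \<Rightarrow> mpoly" where
  "mmono c i j k = monom (monom (monom c i) j) k"

lemma mono_mult: "mmono a i j k * mmono b i' j' k' = mmono (a*b) (i+i') (j+j') (k+k')"
  by (simp add: mmono_def mult_monom)

lemma mono_power: "(mmono a i j k)^n = mmono (a^n) (i*n) (j*n) (k*n)"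
  by (simp add: mmono_def monom_power)

lemma mcoeff_mono: "mcoeff (mmono a i j k) i' j' k' = (if i = i' \<and> j = j' \<and> k = k' then a else 0)"
  by (simp add: mmono_def mcoeff_def)

lemma mcoeff_sum: "mcoeff (\<Sum>x\<in>A. f x) i j k = (\<Sum>x\<in>A. mcoeff (f x) i j k)"
  by (simp add: mcoeff_def coeff_sum)

lemma of_nat_mono: "(of_nat N :: mpoly) * mmono a i j k = mmono (of_nat N * a) i j k"
proof -
  have "(of_nat N :: mpoly) = mmono (of_nat N) 0 0 0"
    by (simp add: mmono_def monom_0 of_nat_poly)
  then show ?thesis by (simp add: mono_mult)
qed

definition T3 :: "nat \<Rightarrow> nat \<Rightarrow> nat \<Rightarrow> nat \<Rightarrow> nat" where
  "T3 n a b c = (n choose a) * ((n - a) choose b) * ((n - a - b) choose c)"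

lemma xv_mono: "xv = mmono 1 1 0 0" by (simp add: xv_def mmono_def monom_0)
lemma yv_mono: "yv = mmono 1 0 1 0" by (simp add: yv_def mmono_def monom_0 one_pCons)
lemma zv_mono: "zv = mmono 1 0 0 1" by (simp add: zv_def mmono_def monom_0 one_pCons)
lemma rv_mono: "rv = mmono (monom 1 1) 0 0 0" by (simp add: rv_def mmono_def monom_0)

lemma Fpol_alt: "Fpol = mmono 1 3 0 1 + (mmono 1 0 4 0 + (mmono (monom 1 1) 0 2 2 + mmono 1 0 0 4))"
  by (simp add: Fpol_def xv_mono yv_mono zv_mono rv_mono mono_power mono_mult add.assoc numeral_2_eq_2)

lemma Fpol_power: "Fpol ^ n = (\<Sum>a\<le>n. \<Sum>b\<le>n-a. \<Sum>c\<le>n-a-b.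
   mmono (of_nat (T3 n a b c) * monom 1 c) (3*a) (4*b+2*c) (a + 2*c + 4*(n-a-b-c)))"
proof -
  have "Fpol ^ n = (\<Sum>a\<le>n. of_nat (n choose a) * mmono 1 3 0 1 ^ a *
     (\<Sum>b\<le>n-a. of_nat ((n-a) choose b) * mmono 1 0 4 0 ^ b *
       (\<Sum>c\<le>n-a-b. of_nat ((n-a-b) choose c) * mmono (monom 1 1) 0 2 2 ^ c * mmono 1 0 0 4 ^ (n-a-b-c))))"
    unfolding Fpol_alt binomial_ring by (simp add: diff_diff_add)
  also have "\<dots> = (\<Sum>a\<le>n. \<Sum>b\<le>n-a. \<Sum>c\<le>n-a-b.
   mmono (of_nat (T3 n a b c) * monom 1 c) (3*a) (4*b+2*c) (a + 2*c + 4*(n-a-b-c)))"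
    by (simp add: sum_distrib_left sum_distrib_right mono_power mono_mult of_nat_mono monom_power
        T3_def algebra_simps)
  finally show ?thesis .
qed

lemma sum_single_nz:
  assumes "finite A" "x0 \<in> A" "\<And>x. x \<in> A \<Longrightarrow> x \<noteq> x0 \<Longrightarrow> f x = 0"
  shows "sum f A = f x0"
proof -
  have "sum f A = f x0 + sum f (A - {x0})" using assms(1,2) by (simp add: sum.remove)
  also have "sum f (A - {x0}) = 0" using assms(3) by (intro sum.neutral) auto
  finally show ?thesis by simp
qed

lemma coeff_Fpow: "coeff (mcoeff (Fpol ^ n) i j k) e = (\<Sum>a\<le>n. \<Sum>b\<le>n-a.
   if e \<le> n-a-b \<and> 3*a = i \<and> 4*b+2*e = j \<and> a + 2*e + 4*(n-a-b-e) = k then int (T3 n a b e) else 0)"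
proof -
  have cm: "coeff (of_nat N * monom 1 c) e = (if c = e then int N else 0)" for N c
    by (simp add: of_nat_poly monom_0[symmetric] mult_monom)
  have inner: "(\<Sum>c\<le>K. coeff (if 3*a = i \<and> 4*b+2*c = j \<and> a + 2*c + 4*(n-a-b-c) = k then (of_nat (T3 n a b c) * monom 1 c) else 0) e)
     = (if e \<le> K \<and> 3*a = i \<and> 4*b+2*e = j \<and> a + 2*e + 4*(n-a-b-e) = k then int (T3 n a b e) else 0)" for K a b
  proof -
    have "(\<Sum>c\<le>K. coeff (if 3*a = i \<and> 4*b+2*c = j \<and> a + 2*c + 4*(n-a-b-c) = k then (of_nat (T3 n a b c) * monom 1 c) else 0) e)
       = (\<Sum>c\<le>K. if c = e then (if 3*a = i \<and> 4*b+2*e = j \<and> a + 2*e + 4*(n-a-b-e) = k then int (T3 n a b e) else 0) else 0)"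
      by (intro sum.cong) (auto simp: cm)
    also have "\<dots> = (if e \<le> K \<and> 3*a = i \<and> 4*b+2*e = j \<and> a + 2*e + 4*(n-a-b-e) = k then int (T3 n a b e) else 0)"
      by (subst sum.delta) auto
    finally show ?thesis .
  qed
  show ?thesis
    unfolding Fpol_power mcoeff_sum mcoeff_mono coeff_sum
    by (simp only: inner)
qed

lemma coeff_F_single:
  assumes "a0 + b0 + e \<le> n" "3*a0 = i" "4*b0+2*e = j" "a0+2*e+4*(n-a0-b0-e) = k"
  shows "coeff (mcoeff (Fpol^n) i j k) e = int (T3 n a0 b0 e)"
proof -
  have "coeff (mcoeff (Fpol^n) i j k) e = (\<Sum>b\<le>n-a0.
   if e \<le> n-a0-b \<and> 3*a0 = i \<and> 4*b+2*e = j \<and> a0 + 2*e + 4*(n-a0-b-e) = k then int (T3 n a0 b e) else 0)"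
    unfolding coeff_Fpow using assms by (intro sum_single_nz) auto
  also have "\<dots> = int (T3 n a0 b0 e)"
    using assms by (subst sum_single_nz[of _ b0]) auto
  finally show ?thesis .
qed

lemma coeff_F_zero:
  assumes "\<And>a b. a + b + e \<le> n \<Longrightarrow> 3*a = i \<Longrightarrow> 4*b+2*e = j \<Longrightarrow> a+2*e+4*(n-a-b-e) = k \<Longrightarrow> False"
  shows "coeff (mcoeff (Fpol^n) i j k) e = 0"
  unfolding coeff_Fpow using assms by (intro sum.neutral ballI) force

lemma idx: "6*m+1-1 = 6*(m::nat)" "2*(6*m+1)-2 = 12*(m::nat)" by auto

lemma c1_coeff: "2*d \<le> m \<Longrightarrow> coeff (c1 (6*m+1)) (m-2*d) = int (T3 (6*m) (4*m) (m+d) (m-2*d))"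
  unfolding c1_def mcoeff_def[symmetric] idx by (rule coeff_F_single) auto

lemma c1_coeff0: "\<not>(\<exists>d. 2*d \<le> m \<and> e = m-2*d) \<Longrightarrow> coeff (c1 (6*m+1)) e = 0"
  unfolding c1_def mcoeff_def[symmetric] idx
proof (rule coeff_F_zero)
  fix a b assume H: "\<not>(\<exists>d. 2*d \<le> m \<and> e = m-2*d)" "a + b + e \<le> 6 * m" "3 * a = 12 * m"
    "4 * b + 2 * e = 6 * m"
  have "a = 4*m" using H(3) by simp
  then have "b + e \<le> 2*m" "2*b + e = 3*m" using H by auto
  then have "2*(b-m) \<le> m \<and> e = m - 2*(b-m)" by arith
  with H(1) show False by blast
qed

lemma c3_coeff: "2*t \<le> 3*m \<Longrightarrow> coeff (c3 (6*m+1)) (3*m-2*t) = int (T3 (6*m) (2*m) t (3*m-2*t))"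
  unfolding c3_def mcoeff_def[symmetric] idx by (rule coeff_F_single) auto

lemma c3_coeff0: "\<not>(\<exists>t. 2*t \<le> 3*m \<and> e = 3*m-2*t) \<Longrightarrow> coeff (c3 (6*m+1)) e = 0"
  unfolding c3_def mcoeff_def[symmetric] idx
proof (rule coeff_F_zero)
  fix a b assume H: "\<not>(\<exists>t. 2*t \<le> 3*m \<and> e = 3*m-2*t)" "a + b + e \<le> 6 * m" "3 * a = 6 * m"
    "4 * b + 2 * e = 6 * m"
  then have "2*b + e = 3*m" by auto
  then have "2*b \<le> 3*m \<and> e = 3*m - 2*b" by arith
  with H(1) show False by blast
qed

lemma c2_coeff: "d \<le> m \<Longrightarrow> coeff (c2 (6*m+1)) (2*m-2*d) = int (T3 (6*m) (2*m) (2*m+d) (2*m-2*d))"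
  unfolding c2_def mcoeff_def[symmetric] idx by (rule coeff_F_single) auto

lemma c2_coeff0: "\<not>(\<exists>d. d \<le> m \<and> e = 2*m-2*d) \<Longrightarrow> coeff (c2 (6*m+1)) e = 0"
  unfolding c2_def mcoeff_def[symmetric] idx
proof (rule coeff_F_zero)
  fix a b assume H: "\<not>(\<exists>d. d \<le> m \<and> e = 2*m-2*d)" "a + b + e \<le> 6 * m" "3 * a = 6 * m"
    "4 * b + 2 * e = 12 * m"
  have "a = 2*m" using H(3) by simp
  then have "b + e \<le> 4*m" "2*b + e = 6*m" using H by auto
  then have "b - 2*m \<le> m \<and> e = 2*m - 2*(b-2*m)" by arith
  with H(1) show False by blast
qed



lemma T3_fact: "a + b + c \<le> n \<Longrightarrow> T3 n a b c * (fact a * fact b * fact c * fact (n-a-b-c)) = (fact n :: nat)"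
proof -
  assume H: "a + b + c \<le> n"
  have 1: "fact a * fact (n - a) * (n choose a) = (fact n :: nat)" using H by (intro binomial_fact_lemma) auto
  have 2: "fact b * fact (n - a - b) * ((n-a) choose b) = (fact (n-a) :: nat)" using H by (intro binomial_fact_lemma) auto
  have 3: "fact c * fact (n - a - b - c) * ((n-a-b) choose c) = (fact (n-a-b) :: nat)" using H by (intro binomial_fact_lemma) auto
  show ?thesis unfolding T3_def using 1 2 3 by (metis (no_types, lifting) mult.assoc mult.commute)
qed

lemma T3_rec:
  assumes "a + b + c + 2 \<le> n"
  shows "T3 n a (Suc b) c * (Suc b * (n-a-b-c-1)) = T3 n a b (c+2) * ((c+2) * (c+1))"
proof -
  obtain f where n: "n = a + b + c + 2 + f" using assms le_Suc_ex by blast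
  have A: "T3 n a (Suc b) c * (fact a * fact (Suc b) * fact c * fact (f+1)) = fact n"
    using T3_fact[of a "Suc b" c n] n by (simp add: algebra_simps)
  have B: "T3 n a b (c+2) * (fact a * fact b * fact (c+2) * fact f) = fact n"
    using T3_fact[of a b "c+2" n] n by (simp add: algebra_simps)
  have F: "fact a * fact b * fact (c+2) * fact f * (Suc b * (f+1)) = fact a * fact (Suc b) * fact c * fact (f+1) * ((c+2)*(c+1))"
    by (simp add: fact_Suc numeral_2_eq_2 algebra_simps)
  have "fact a * fact b * fact (c+2) * fact f * (T3 n a (Suc b) c * (Suc b * (f+1))) =
        fact a * fact b * fact (c+2) * fact f * (T3 n a b (c+2) * ((c+2) * (c+1)))"
  proof -
    have "fact a * fact b * fact (c+2) * fact f * (T3 n a (Suc b) c * (Suc b * (f+1)))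
       = T3 n a (Suc b) c * (fact a * fact (Suc b) * fact c * fact (f+1)) * ((c+2)*(c+1))"
      using F by (metis (no_types, lifting) mult.assoc mult.left_commute)
    also have "\<dots> = fact n * ((c+2)*(c+1))" using A by simp
    also have "\<dots> = fact a * fact b * fact (c+2) * fact f * (T3 n a b (c+2) * ((c+2) * (c+1)))"
      using B by (metis mult.assoc mult.commute)
    finally show ?thesis .
  qed
  then have "T3 n a (Suc b) c * (Suc b * (f+1)) = T3 n a b (c+2) * ((c+2) * (c+1))"
    by (simp del: mult_cancel_left1 mult_cancel_right1)
  moreover have "n-a-b-c-1 = f+1" using n by simp
  ultimately show ?thesis by simp
qed

definition Zp :: "int poly" where "Zp = [:-4, 0, 1:]"

lemma coeff_Zpow: "coeff (Zp ^ M) t = (if even t then int (M choose (t div 2)) * (-4) ^ (M - t div 2) else 0)"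
proof -
  have Z: "Zp = monom 1 2 + [:-4:]" by (simp add: Zp_def monom_altdef numeral_2_eq_2 one_pCons)
  have "Zp ^ M = (\<Sum>k\<le>M. monom (int (M choose k) * (-4)^(M-k)) (2*k))"
    unfolding Z binomial_ring
    by (intro sum.cong refl) (simp add: monom_power of_nat_poly monom_0[symmetric] mult_monom
        flip: monom_0 )
  then have "coeff (Zp ^ M) t = (\<Sum>k\<le>M. if 2*k = t then int (M choose k) * (-4)^(M-k) else 0)"
    by (simp add: coeff_sum)
  also have "\<dots> = (\<Sum>k\<le>M. if k = t div 2 then (if even t then int (M choose k) * (-4)^(M-k) else 0) else 0)"
    by (intro sum.cong refl) auto
  also have "\<dots> = (if even t then int (M choose (t div 2)) * (-4) ^ (M - t div 2) else 0)"
    by (subst sum.delta) auto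
  finally show ?thesis .
qed

lemma binom_step: "(M choose h) * (M - h) = (M choose (Suc h)) * Suc h"
  using binomial_absorb_comp[of M h] times_binomial_minus1_eq[of "Suc h" M] by (simp add: mult.commute)

lemma poch_step: "pochhammer (x::int) s * ((x + of_nat s) * (x + of_nat s + 1)) = x * (x+1) * pochhammer (x+2) s"
proof -
  have "pochhammer x (Suc (Suc s)) = x * ((x + 1) * pochhammer (x+2) s)"
    by (simp add: pochhammer_rec algebra_simps)
  moreover have "pochhammer x (Suc (Suc s)) = (x + of_nat s + 1) * ((x + of_nat s) * pochhammer x s)"
    by (simp add: pochhammer_rec' algebra_simps)
  ultimately show ?thesis by (simp add: algebra_simps)
qed

lemma beta_rec:
  assumes "e + s = 2*h" "h < M"
  shows "coeff ((pderiv^^s)(Zp^M)) e * (int (e+s+2) * int (e+s+1) * int (M-h))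
       = coeff ((pderiv^^s)(Zp^M)) (e+2) * (int (e+2) * int (e+1) * int (h+1) * (-4))"
proof -
  have c0: "coeff ((pderiv^^s)(Zp^M)) e = pochhammer (int e + 1) s * (int (M choose h) * (-4)^(M-h))"
    using assms by (simp add: coeff_higher_pderiv coeff_Zpow add.commute)
  have c2: "coeff ((pderiv^^s)(Zp^M)) (e+2) = pochhammer (int e + 3) s * (int (M choose (h+1)) * (-4)^(M-h-1))"
  proof -
    have "e + 2 + s = 2 * (h+1)" using assms by simp
    then show ?thesis by (simp add: coeff_higher_pderiv coeff_Zpow add.commute add.left_commute)
  qed
  have P: "pochhammer (int e + 1) s * ((int e + 1 + int s) * (int e + 1 + int s + 1)) = (int e + 1) * (int e + 1 + 1) * pochhammer (int e + 3) s"
    using poch_step[of "int e + 1" s] by (simp add: algebra_simps)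
  have Bn: "int (M choose h) * int (M - h) = int (M choose (h+1)) * int (h+1)"
    using binom_step[of M h] by (metis Suc_eq_plus1 of_nat_mult)
  have W: "(-4::int)^(M-h) = (-4)^(M-h-1) * (-4)"
    using assms by (metis Suc_diff_Suc diff_Suc_1 power_Suc2 zero_less_diff)
  have "coeff ((pderiv^^s)(Zp^M)) e * (int (e+s+2) * int (e+s+1) * int (M-h))
      = (pochhammer (int e + 1) s * ((int e + 1 + int s) * (int e + 1 + int s + 1))) * (int (M choose h) * int (M - h)) * (-4)^(M-h)"
    unfolding c0 by (simp add: algebra_simps)
  also have "\<dots> = (int e + 1) * (int e + 1 + 1) * pochhammer (int e + 3) s * (int (M choose (h+1)) * int (h+1)) * ((-4)^(M-h-1) * (-4))"
    unfolding P Bn W ..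
  also have "\<dots> = coeff ((pderiv^^s)(Zp^M)) (e+2) * (int (e+2) * int (e+1) * int (h+1) * (-4))"
    unfolding c2 by (simp add: algebra_simps)
  finally show ?thesis .
qed

lemma chain:
  fixes \<alpha> \<beta> U V U' V' :: "nat \<Rightarrow> int" and p :: int
  assumes ra: "\<And>d. d < N \<Longrightarrow> \<alpha> (Suc d) * U d = \<alpha> d * V d"
    and rb: "\<And>d. d < N \<Longrightarrow> \<beta> (Suc d) * U' d = \<beta> d * V' d"
    and cr: "\<And>d. d < N \<Longrightarrow> [V d * U' d = V' d * U d] (mod p)"
    and cu: "\<And>d. d < N \<Longrightarrow> coprime (U d * U' d) p"
  shows "d \<le> N \<Longrightarrow> [\<alpha> d * \<beta> 0 = \<beta> d * \<alpha> 0] (mod p)"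
proof (induction d)
  case 0 then show ?case by (simp add: mult.commute)
next
  case (Suc d)
  then have d: "d < N" by simp
  with Suc have IH: "[\<alpha> d * \<beta> 0 = \<beta> d * \<alpha> 0] (mod p)" by simp
  have "\<alpha> (Suc d) * \<beta> 0 * (U d * U' d) = (\<alpha> (Suc d) * U d) * (\<beta> 0 * U' d)"
    by (simp add: algebra_simps)
  also have "\<dots> = (\<alpha> d * V d) * (\<beta> 0 * U' d)" using ra[OF d] by simp
  also have "\<dots> = (\<alpha> d * \<beta> 0) * (V d * U' d)" by (simp add: algebra_simps)
  finally have E: "\<alpha> (Suc d) * \<beta> 0 * (U d * U' d) = (\<alpha> d * \<beta> 0) * (V d * U' d)" .
  have "[\<alpha> (Suc d) * \<beta> 0 * (U d * U' d) = (\<alpha> d * \<beta> 0) * (V d * U' d)] (mod p)"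
    unfolding E by (rule cong_refl)
  also have "[(\<alpha> d * \<beta> 0) * (V d * U' d) = (\<beta> d * \<alpha> 0) * (V' d * U d)] (mod p)"
    using IH cr[OF d] by (rule cong_mult)
  also have "(\<beta> d * \<alpha> 0) * (V' d * U d) = \<beta> (Suc d) * \<alpha> 0 * (U d * U' d)"
    using rb[OF d] by (simp add: algebra_simps)
  finally show ?case using cong_mult_rcancel[OF cu[OF d]] by blast
qed



lemma cong_by_witness: "(x::int) - y = p * w \<Longrightarrow> [x = y] (mod p)"
  by (simp add: cong_iff_dvd_diff)

lemma coprime_small: "prime (p::int) \<Longrightarrow> 0 < x \<Longrightarrow> x < p \<Longrightarrow> coprime x p"
  by (metis coprime_commute prime_imp_coprime zdvd_not_zless)

lemma c2_cong:
  assumes "prime (int (6*m+1))"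
  shows "[coeff (c2 (6*m+1)) e = int (T3 (6*m) (2*m) (2*m) (2*m)) * coeff (Zp^m) e] (mod int (6*m+1))"
proof -
  define p where "p = int (6*m+1)"
  define \<alpha> where "\<alpha> d = int (T3 (6*m) (2*m) (2*m+d) (2*m-2*d))" for d
  define \<beta> where "\<beta> d = coeff ((pderiv^^0) (Zp^m)) (2*m-2*d)" for d
  define U where "U d = int (2*m+d+1) * int (d+1)" for d
  define V where "V d = int (2*m-2*d) * int (2*m-2*d-1)" for d
  define U' where "U' d = int (2*m-2*d) * int (2*m-2*d-1) * int (d+1)" for d
  define V' where "V' d = int (2*m-2*d) * int (2*m-2*d-1) * int (m-d) * (-4)" for d
  have main: "[\<alpha> d * \<beta> 0 = \<beta> d * \<alpha> 0] (mod p)" if "d \<le> m" for d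
  proof (rule chain[OF _ _ _ _ that])
    fix d assume d: "d < m"
    then obtain k where m: "m = d + 1 + k" using less_imp_Suc_add by fastforce
    have e1: "2*m - 2*d = 2*k+2" "2*m-2*d-1 = 2*k+1" "m - d = k+1" "2*m - 2*(Suc d) = 2*k"
       "6*m - 2*m - (2*m+d) - 2*k - 1 = d + 1" using m by auto
    show "\<alpha> (Suc d) * U d = \<alpha> d * V d"
    proof -
      have H: "T3 (6*m) (2*m) (Suc (2*m+d)) (2*k) * (Suc (2*m+d) * (6*m - 2*m - (2*m+d) - 2*k - 1)) =
            T3 (6*m) (2*m) (2*m+d) (2*k+2) * ((2*k+2) * (2*k+1))"
        by (rule T3_rec) (simp add: m)
      have a1: "\<alpha> (Suc d) = int (T3 (6*m) (2*m) (Suc (2*m+d)) (2*k))" unfolding \<alpha>_def using e1(4) by simp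
      have a0: "\<alpha> d = int (T3 (6*m) (2*m) (2*m+d) (2*k+2))" unfolding \<alpha>_def using e1(1) by simp
      have H': "T3 (6*m) (2*m) (Suc (2*m+d)) (2*k) * ((2*m+d+1) * (d+1)) =
            T3 (6*m) (2*m) (2*m+d) (2*k+2) * ((2*k+2) * (2*k+1))" using H unfolding e1(5) by (simp only: Suc_eq_plus1)
      have "int (T3 (6*m) (2*m) (Suc (2*m+d)) (2*k) * ((2*m+d+1) * (d+1))) =
            int (T3 (6*m) (2*m) (2*m+d) (2*k+2) * ((2*k+2) * (2*k+1)))" using H' by (rule arg_cong)
      moreover have "2*k+2-1 = 2*k+1" by simp
      ultimately show ?thesis unfolding a1 a0 U_def V_def e1(1) by (simp only: of_nat_mult)
    qed
    show "\<beta> (Suc d) * U' d = \<beta> d * V' d"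
    proof -
      have H: "coeff ((pderiv^^0)(Zp^m)) (2*k) * (int (2*k+0+2) * int (2*k+0+1) * int (m-k))
       = coeff ((pderiv^^0)(Zp^m)) (2*k+2) * (int (2*k+2) * int (2*k+1) * int (k+1) * (-4))"
        by (rule beta_rec) (use m in auto)
      have mk: "m - k = d + 1" using m by simp
      have b1: "\<beta> (Suc d) = coeff ((pderiv^^0)(Zp^m)) (2*k)" unfolding \<beta>_def using e1(4) by simp
      have b0: "\<beta> d = coeff ((pderiv^^0)(Zp^m)) (2*k+2)" unfolding \<beta>_def using e1(1) by simp
      show ?thesis unfolding b1 b0 U'_def V'_def e1(1,2,3) using H unfolding mk by simp
    qed
    show "[V d * U' d = V' d * U d] (mod p)"
    proof (rule cong_by_witness[where w = "2 * int (2*k+2) * int (2*k+1) * int (d+1) * int (k+1)"])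
      show "V d * U' d - V' d * U d = p * (2 * int (2*k+2) * int (2*k+1) * int (d+1) * int (k+1))"
        unfolding V_def U'_def V'_def U_def e1 p_def m by (simp add: algebra_simps)
    qed
    have cp: "coprime (int x) p" if "0 < x" "x < 6*m+1" for x
      using coprime_small[of p "int x"] assms that unfolding p_def by simp
    show "coprime (U d * U' d) p"
      unfolding U_def U'_def e1 coprime_mult_left_iff
      by (intro conjI cp) (use m in auto)
  qed
  have b0: "\<beta> 0 = 1" by (simp add: \<beta>_def coeff_Zpow)
  show ?thesis
  proof (cases "\<exists>d. d \<le> m \<and> e = 2*m-2*d")
    case True
    then obtain d where d: "d \<le> m" "e = 2*m-2*d" by blast
    have "coeff (c2 (6*m+1)) e = \<alpha> d" using c2_coeff[OF d(1)] d(2) \<alpha>_def by simp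
    moreover have "coeff (Zp^m) e = \<beta> d" using d(2) \<beta>_def by simp
    ultimately show ?thesis using main[OF d(1)] b0 unfolding p_def \<alpha>_def by (simp add: mult.commute)
  next
    case False
    then have "coeff (c2 (6*m+1)) e = 0" by (rule c2_coeff0)
    moreover have "coeff (Zp^m) e = 0"
    proof (cases "even e")
      case True
      then obtain h where h: "e = 2*h" by blast
      have "m < h"
      proof (rule ccontr)
        assume "\<not> m < h"
        then have "m - h \<le> m \<and> e = 2*m - 2*(m-h)" using h by auto
        with False show False by blast
      qed
      then show ?thesis using h by (simp add: coeff_Zpow)
    qed (simp add: coeff_Zpow)
    ultimately show ?thesis by simp
  qed
qed

lemma c1_cong:
  assumes "prime (int (6*m+1))"
  shows "[coeff (c1 (6*m+1)) e * coeff ((pderiv^^(3*m)) (Zp^(2*m))) m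
        = coeff ((pderiv^^(3*m)) (Zp^(2*m))) e * int (T3 (6*m) (4*m) m m)] (mod int (6*m+1))"
proof -
  define p where "p = int (6*m+1)"
  define E where "E = (pderiv^^(3*m)) (Zp^(2*m))"
  define \<alpha> where "\<alpha> d = int (T3 (6*m) (4*m) (m+d) (m-2*d))" for d
  define \<beta> where "\<beta> d = coeff E (m-2*d)" for d
  define U where "U d = int (m+d+1) * int (d+1)" for d
  define V where "V d = int (m-2*d) * int (m-2*d-1)" for d
  define U' where "U' d = int (4*m-2*d) * int (4*m-2*d-1) * int (d+1)" for d
  define V' where "V' d = int (m-2*d) * int (m-2*d-1) * int (2*m-d) * (-4)" for d
  have main: "[\<alpha> d * \<beta> 0 = \<beta> d * \<alpha> 0] (mod p)" if "d \<le> m div 2" for d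
  proof (rule chain[OF _ _ _ _ that])
    fix d assume d: "d < m div 2"
    have "2*(d+1) \<le> 2*(m div 2)" using d by simp
    also have "\<dots> \<le> m" by simp
    finally have "2*d+2 \<le> m" by simp
    then obtain k where m: "m = 2*d + 2 + k" using le_Suc_ex by blast
    have e1: "m - 2*d = k+2" "m-2*d-1 = k+1" "m - 2*(Suc d) = k"
       "6*m - 4*m - (m+d) - k - 1 = d + 1" "k+2-1 = k+1" using m by auto
    show "\<alpha> (Suc d) * U d = \<alpha> d * V d"
    proof -
      have H: "T3 (6*m) (4*m) (Suc (m+d)) k * (Suc (m+d) * (6*m - 4*m - (m+d) - k - 1)) =
            T3 (6*m) (4*m) (m+d) (k+2) * ((k+2) * (k+1))"
        by (rule T3_rec) (simp add: m)
      have a1: "\<alpha> (Suc d) = int (T3 (6*m) (4*m) (Suc (m+d)) k)" unfolding \<alpha>_def using e1(3) by simp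
      have a0: "\<alpha> d = int (T3 (6*m) (4*m) (m+d) (k+2))" unfolding \<alpha>_def using e1(1) by simp
      have H': "T3 (6*m) (4*m) (Suc (m+d)) k * ((m+d+1) * (d+1)) =
            T3 (6*m) (4*m) (m+d) (k+2) * ((k+2) * (k+1))" using H unfolding e1(4) by (simp only: Suc_eq_plus1)
      have "int (T3 (6*m) (4*m) (Suc (m+d)) k * ((m+d+1) * (d+1))) =
            int (T3 (6*m) (4*m) (m+d) (k+2) * ((k+2) * (k+1)))" using H' by (rule arg_cong)
      then show ?thesis unfolding a1 a0 U_def V_def e1(1) e1(5) by (simp only: of_nat_mult)
    qed
    show "\<beta> (Suc d) * U' d = \<beta> d * V' d"
    proof -
      have H: "coeff E k * (int (k+3*m+2) * int (k+3*m+1) * int (2*m-(2*k+3*d+3)))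
       = coeff E (k+2) * (int (k+2) * int (k+1) * int ((2*k+3*d+3)+1) * (-4))"
        unfolding E_def by (rule beta_rec) (use m in auto)
      have f: "k+3*m+2 = 4*m-2*d" "k+3*m+1 = 4*m-2*d-1" "2*m-(2*k+3*d+3) = d+1" "(2*k+3*d+3)+1 = 2*m-d"
        using m by auto
      have b1: "\<beta> (Suc d) = coeff E k" unfolding \<beta>_def using e1(3) by simp
      have b0: "\<beta> d = coeff E (k+2)" unfolding \<beta>_def using e1(1) by simp
      show ?thesis unfolding b1 b0 U'_def V'_def e1(1,2) using H unfolding f by simp
    qed
    show "[V d * U' d = V' d * U d] (mod p)"
    proof (rule cong_by_witness[where w = "2 * int (k+2) * int (k+1) * int (d+1) * int (2*m-d)"])
      have f: "4*m-2*d = 6*d+8+4*k" "4*m-2*d-1 = 6*d+7+4*k" "2*m-d = 3*d+4+2*k" using m by auto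
      show "V d * U' d - V' d * U d = p * (2 * int (k+2) * int (k+1) * int (d+1) * int (2*m-d))"
        unfolding V_def U'_def V'_def U_def e1 f p_def unfolding m by (simp add: algebra_simps)
    qed
    have cp: "coprime (int x) p" if "0 < x" "x < 6*m+1" for x
      using coprime_small[of p "int x"] assms that unfolding p_def by simp
    show "coprime (U d * U' d) p"
      unfolding U_def U'_def coprime_mult_left_iff
      by (intro conjI cp) (use m in auto)
  qed
  show ?thesis
  proof (cases "\<exists>d. 2*d \<le> m \<and> e = m-2*d")
    case True
    then obtain d where d: "2*d \<le> m" "e = m-2*d" by blast
    have "coeff (c1 (6*m+1)) e = \<alpha> d" using c1_coeff[OF d(1)] d(2) \<alpha>_def by simp
    moreover have "coeff E e = \<beta> d" using d(2) \<beta>_def by simp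
    moreover have "d \<le> m div 2" using d(1) by simp
    ultimately show ?thesis using main unfolding p_def \<alpha>_def \<beta>_def E_def by simp
  next
    case False
    then have "coeff (c1 (6*m+1)) e = 0" by (rule c1_coeff0)
    moreover have "coeff E e = 0"
    proof (cases "even (e + 3*m)")
      case True
      then obtain h where h: "e + 3*m = 2*h" by blast
      have "2*m < h"
      proof (rule ccontr)
        assume "\<not> 2*m < h"
        then have "2*(2*m-h) \<le> m \<and> e = m - 2*(2*m-h)" using h by auto
        with False show False by blast
      qed
      then show ?thesis using h by (simp add: E_def coeff_higher_pderiv coeff_Zpow)
    qed (simp add: E_def coeff_higher_pderiv coeff_Zpow)
    ultimately show ?thesis unfolding E_def by simp
  qed
qed


lemma c3_cong:
  assumes "prime (int (6*m+1))"
  shows "[coeff (c3 (6*m+1)) e * coeff ((pderiv^^m) (Zp^(2*m))) (3*m)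
        = coeff ((pderiv^^m) (Zp^(2*m))) e * int (T3 (6*m) (2*m) 0 (3*m))] (mod int (6*m+1))"
proof -
  define p where "p = int (6*m+1)"
  define E where "E = (pderiv^^m) (Zp^(2*m))"
  define \<alpha> where "\<alpha> t = int (T3 (6*m) (2*m) t (3*m-2*t))" for t
  define \<beta> where "\<beta> t = coeff E (3*m-2*t)" for t
  define U where "U t = int (t+1) * int (m+t+1)" for t
  define V where "V t = int (3*m-2*t) * int (3*m-2*t-1)" for t
  define U' where "U' t = int (4*m-2*t) * int (4*m-2*t-1) * int (t+1)" for t
  define V' where "V' t = int (3*m-2*t) * int (3*m-2*t-1) * int (2*m-t) * (-4)" for t
  have main: "[\<alpha> t * \<beta> 0 = \<beta> t * \<alpha> 0] (mod p)" if "t \<le> (3*m) div 2" for t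
  proof (rule chain[OF _ _ _ _ that])
    fix t assume t: "t < (3*m) div 2"
    have "2*(t+1) \<le> 2*((3*m) div 2)" using t by simp
    also have "\<dots> \<le> 3*m" by simp
    finally have "2*t+2 \<le> 3*m" by simp
    then obtain k where m: "3*m = 2*t + 2 + k" using le_Suc_ex by blast
    have e1: "3*m - 2*t = k+2" "3*m-2*t-1 = k+1" "3*m - 2*(Suc t) = k"
       "6*m - 2*m - t - k - 1 = m + t + 1" "k+2-1 = k+1" using m by auto
    show "\<alpha> (Suc t) * U t = \<alpha> t * V t"
    proof -
      have H: "T3 (6*m) (2*m) (Suc t) k * (Suc t * (6*m - 2*m - t - k - 1)) =
            T3 (6*m) (2*m) t (k+2) * ((k+2) * (k+1))"
        by (rule T3_rec) (use m in auto)
      have a1: "\<alpha> (Suc t) = int (T3 (6*m) (2*m) (Suc t) k)" unfolding \<alpha>_def using e1(3) by simp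
      have a0: "\<alpha> t = int (T3 (6*m) (2*m) t (k+2))" unfolding \<alpha>_def using e1(1) by simp
      have H': "T3 (6*m) (2*m) (Suc t) k * ((t+1) * (m+t+1)) =
            T3 (6*m) (2*m) t (k+2) * ((k+2) * (k+1))" using H unfolding e1(4) by (simp only: Suc_eq_plus1)
      have "int (T3 (6*m) (2*m) (Suc t) k * ((t+1) * (m+t+1))) =
            int (T3 (6*m) (2*m) t (k+2) * ((k+2) * (k+1)))" using H' by (rule arg_cong)
      then show ?thesis unfolding a1 a0 U_def V_def e1(1) e1(5) by (simp only: of_nat_mult)
    qed
    show "\<beta> (Suc t) * U' t = \<beta> t * V' t"
    proof -
      have H: "coeff E k * (int (k+m+2) * int (k+m+1) * int (2*m-(2*m-t-1)))
       = coeff E (k+2) * (int (k+2) * int (k+1) * int ((2*m-t-1)+1) * (-4))"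
        unfolding E_def by (rule beta_rec) (use m in auto)
      have f: "k+m+2 = 4*m-2*t" "k+m+1 = 4*m-2*t-1" "2*m-(2*m-t-1) = t+1" "(2*m-t-1)+1 = 2*m-t"
        using m by auto
      have b1: "\<beta> (Suc t) = coeff E k" unfolding \<beta>_def using e1(3) by simp
      have b0: "\<beta> t = coeff E (k+2)" unfolding \<beta>_def using e1(1) by simp
      show ?thesis unfolding b1 b0 U'_def V'_def e1(1,2) using H unfolding f by simp
    qed
    show "[V t * U' t = V' t * U t] (mod p)"
    proof (rule cong_by_witness[where w = "2 * int (k+2) * int (k+1) * int (t+1) * int (2*m-t)"])
      have f: "int (3*m-2*t) = 3*int m - 2*int t" "int (3*m-2*t-1) = 3*int m - 2*int t - 1"
        "int (4*m-2*t) = 4*int m - 2*int t" "int (4*m-2*t-1) = 4*int m - 2*int t - 1"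
        "int (2*m-t) = 2*int m - int t" "int (k+2) = 3*int m - 2*int t" "int (k+1) = 3*int m - 2*int t - 1"
        using m by auto
      show "V t * U' t - V' t * U t = p * (2 * int (k+2) * int (k+1) * int (t+1) * int (2*m-t))"
        unfolding V_def U'_def V'_def U_def f p_def by (simp add: algebra_simps)
    qed
    have cp: "coprime (int x) p" if "0 < x" "x < 6*m+1" for x
      using coprime_small[of p "int x"] assms that unfolding p_def by simp
    show "coprime (U t * U' t) p"
      unfolding U_def U'_def coprime_mult_left_iff
      by (intro conjI cp) (use m in auto)
  qed
  show ?thesis
  proof (cases "\<exists>t. 2*t \<le> 3*m \<and> e = 3*m-2*t")
    case True
    then obtain t where t: "2*t \<le> 3*m" "e = 3*m-2*t" by blast
    have "coeff (c3 (6*m+1)) e = \<alpha> t" using c3_coeff[OF t(1)] t(2) \<alpha>_def by simp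
    moreover have "coeff E e = \<beta> t" using t(2) \<beta>_def by simp
    moreover have "t \<le> (3*m) div 2" using t(1) by simp
    ultimately show ?thesis using main unfolding p_def \<alpha>_def \<beta>_def E_def by simp
  next
    case False
    then have "coeff (c3 (6*m+1)) e = 0" by (rule c3_coeff0)
    moreover have "coeff E e = 0"
    proof (cases "even (e + m)")
      case True
      then obtain h where h: "e + m = 2*h" by blast
      have "2*m < h"
      proof (rule ccontr)
        assume "\<not> 2*m < h"
        then have "2*(2*m-h) \<le> 3*m \<and> e = 3*m - 2*(2*m-h)" using h by auto
        with False show False by blast
      qed
      then show ?thesis using h by (simp add: E_def coeff_higher_pderiv coeff_Zpow)
    qed (simp add: E_def coeff_higher_pderiv coeff_Zpow)
    ultimately show ?thesis unfolding E_def by simp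
  qed
qed



lemma Suc_choose': "Suc n choose k = (n choose k) + (if k = 0 then 0 else (n choose (k-1)))"
  by (cases k) simp_all

lemma pderiv_sum': "pderiv (sum f A) = (\<Sum>x\<in>A. pderiv (f x))"
  using higher_pderiv_sum[of 1 f A] by simp

lemma higher_pderiv_mult:
  fixes f g :: "int poly"
  shows "(pderiv^^n) (f*g) = (\<Sum>i\<le>n. smult (of_nat (n choose i)) ((pderiv^^i) f * (pderiv^^(n-i)) g))"
proof (induction n)
  case 0 then show ?case by simp
next
  case (Suc n)
  define X where "X i = (pderiv^^i) f * (pderiv^^(Suc n - i)) g" for i
  have "(pderiv^^(Suc n)) (f*g) = pderiv ((pderiv^^n) (f*g))" by simp
  also have "\<dots> = (\<Sum>i\<le>n. smult (of_nat (n choose i)) ((pderiv^^(Suc i)) f * (pderiv^^(n-i)) g))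
                 + (\<Sum>i\<le>n. smult (of_nat (n choose i)) ((pderiv^^i) f * (pderiv^^(Suc (n-i))) g))"
    unfolding Suc pderiv_sum' pderiv_smult pderiv_mult
    by (simp add: sum.distrib smult_add_right algebra_simps)
  also have "(\<Sum>i\<le>n. smult (of_nat (n choose i)) ((pderiv^^(Suc i)) f * (pderiv^^(n-i)) g))
      = (\<Sum>i\<le>Suc n. smult (of_nat (if i = 0 then 0 else (n choose (i-1)))) (X i))"
    by (subst sum.atMost_Suc_shift) (simp add: X_def)
  also have "(\<Sum>i\<le>n. smult (of_nat (n choose i)) ((pderiv^^i) f * (pderiv^^(Suc (n-i))) g))
      = (\<Sum>i\<le>Suc n. smult (of_nat (n choose i)) (X i))"
    by (simp add: X_def Suc_diff_le)
  also have "(\<Sum>i\<le>Suc n. smult (of_nat (if i = 0 then 0 else (n choose (i-1)))) (X i))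
      + (\<Sum>i\<le>Suc n. smult (of_nat (n choose i)) (X i)) = (\<Sum>i\<le>Suc n. smult (of_nat (Suc n choose i)) (X i))"
    unfolding sum.distrib[symmetric] by (intro sum.cong refl) (simp add: Suc_choose' smult_add_left)
  finally show ?case by (simp add: X_def)
qed

definition K :: "nat \<Rightarrow> nat \<Rightarrow> nat" where "K n i = (n choose i) * fact i"

lemma K_fact: "i \<le> n \<Longrightarrow> K n i * fact (n - i) = fact n"
  unfolding K_def using binomial_fact_lemma[of i n] by (simp add: algebra_simps)

lemma higher_pderiv_lin_power:
  "(pderiv^^i) ([:c, 1:]^n) = smult (of_nat (K n i)) ([:c, 1:]^(n-i))"
proof (induction i)
  case 0 then show ?case by (simp add: K_def)
next
  case (Suc i)
  have "(pderiv^^(Suc i)) ([:c, 1:]^n) = smult (of_nat (K n i)) (pderiv ([:c, 1:]^(n-i)))"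
    using Suc by (simp add: pderiv_smult)
  also have "pderiv ([:c, 1:]^(n-i)) = smult (of_nat (n-i)) ([:c,1:]^(n - Suc i))"
    by (simp add: pderiv_power pderiv_pCons)
  also have "smult (of_nat (K n i)) (smult (of_nat (n-i)) ([:c,1:]^(n - Suc i))) = smult (of_nat (K n (Suc i))) ([:c, 1:]^(n-Suc i))"
  proof -
    have "K n i * (n - i) = K n (Suc i)" unfolding K_def using binom_step[of n i]
      by (simp add: algebra_simps)
    then show ?thesis by (metis of_nat_mult smult_smult)
  qed
  finally show ?case .
qed



lemma legendre_num:
  assumes "j \<le> m"
  shows "fact (3*m) * ((m choose j) * K (2*m) j * K (2*m) (m-j))
       = fact m * ((3*m choose (m+j)) * K (2*m) (m+j) * K (2*m) (2*m-j))"
proof -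
  have 1: "(m choose j) * fact j * fact (m-j) = (fact m :: nat)"
    using binomial_fact_lemma[OF assms] by (simp add: algebra_simps)
  have 2: "K (2*m) j * fact (2*m-j) = fact (2*m)" using assms by (intro K_fact) simp
  have 3: "K (2*m) (m-j) * fact (m+j) = fact (2*m)"
    using K_fact[of "m-j" "2*m"] assms by (simp add: algebra_simps)
  have 4: "(3*m choose (m+j)) * fact (m+j) * fact (2*m-j) = (fact (3*m) :: nat)"
    using binomial_fact_lemma[of "m+j" "3*m"] assms by (simp add: algebra_simps)
  have 5: "K (2*m) (m+j) * fact (m-j) = fact (2*m)"
    using K_fact[of "m+j" "2*m"] assms by (simp add: algebra_simps)
  have 6: "K (2*m) (2*m-j) * fact j = fact (2*m)"
    using K_fact[of "2*m-j" "2*m"] assms by (simp add: algebra_simps)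
  define W :: nat where "W = fact (2*m-j) * fact (m+j) * fact (m-j) * fact j"
  have "fact (3*m) * ((m choose j) * K (2*m) j * K (2*m) (m-j)) * W
      = fact (3*m) * (((m choose j) * fact j * fact (m-j)) * (K (2*m) j * fact (2*m-j)) * (K (2*m) (m-j) * fact (m+j)))"
    unfolding W_def by (simp only: mult.assoc mult.commute mult.left_commute)
  also have "\<dots> = fact (3*m) * (fact m * fact (2*m) * fact (2*m))" unfolding 1 2 3 ..
  also have "\<dots> = fact m * (((3*m choose (m+j)) * fact (m+j) * fact (2*m-j)) * (K (2*m) (m+j) * fact (m-j)) * (K (2*m) (2*m-j) * fact j))"
    unfolding 4 5 6 by (simp only: mult.assoc mult.commute mult.left_commute)
  also have "\<dots> = fact m * ((3*m choose (m+j)) * K (2*m) (m+j) * K (2*m) (2*m-j)) * W"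
    unfolding W_def by (simp only: mult.assoc mult.commute mult.left_commute)
  finally show ?thesis unfolding W_def by simp
qed

definition Am :: "int poly" where "Am = [:-2, 1:]"
definition Bp :: "int poly" where "Bp = [:2, 1:]"

lemma Zp_AB: "Zp = Am * Bp" by (simp add: Zp_def Am_def Bp_def)

lemma smult_sum_right: "smult c (\<Sum>i\<in>S. f i) = (\<Sum>i\<in>S. smult c (f i))"
  by (induct S rule: infinite_finite_induct) (auto simp: smult_add_right)

lemma legendre:
  "smult (of_nat (fact (3*m))) ((pderiv^^m) (Zp^(2*m)))
   = smult (of_nat (fact m)) (Zp^m * (pderiv^^(3*m)) (Zp^(2*m)))"
proof -
  define M where "M j = Am^(2*m-j) * Bp^(m+j)" for j
  have DAm: "(pderiv^^i) (Am^n) = smult (of_nat (K n i)) (Am^(n-i))" for i n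
    unfolding Am_def by (rule higher_pderiv_lin_power)
  have DBp: "(pderiv^^i) (Bp^n) = smult (of_nat (K n i)) (Bp^(n-i))" for i n
    unfolding Bp_def by (rule higher_pderiv_lin_power)
  have L: "(pderiv^^m) (Zp^(2*m)) = (\<Sum>j\<le>m. smult (of_nat ((m choose j) * K (2*m) j * K (2*m) (m-j))) (M j))"
    unfolding Zp_AB power_mult_distrib higher_pderiv_mult DAm DBp
    by (intro sum.cong refl) (simp add: M_def Suc_diff_le algebra_simps)
  define g where "g i = smult (of_nat ((3*m choose i) * K (2*m) i * K (2*m) (3*m-i))) (Zp^m * (Am^(2*m-i) * Bp^(2*m-(3*m-i))))" for i
  have R0: "Zp^m * (pderiv^^(3*m)) (Zp^(2*m)) = (\<Sum>i\<le>3*m. g i)"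
    unfolding Zp_AB power_mult_distrib higher_pderiv_mult DAm DBp sum_distrib_left
    by (intro sum.cong refl) (simp add: g_def Zp_AB power_mult_distrib algebra_simps)
  have "(\<Sum>i\<le>3*m. g i) = (\<Sum>i\<in>{m..2*m}. g i)"
  proof (rule sum.mono_neutral_right)
    show "\<forall>i\<in>{..3*m} - {m..2*m}. g i = 0"
    proof
      fix i assume "i \<in> {..3*m} - {m..2*m}"
      then have "i < m \<or> 2*m < i" by auto
      then have "K (2*m) i * K (2*m) (3*m-i) = 0" by (auto simp: K_def)
      then show "g i = 0" by (simp add: g_def)
    qed
  qed auto
  also have "\<dots> = (\<Sum>j\<in>{0..m}. g (j+m))"
    using sum.shift_bounds_cl_nat_ivl[of g 0 m m] by (simp add: mult_2)
  also have "\<dots> = (\<Sum>j\<le>m. smult (of_nat ((3*m choose (m+j)) * K (2*m) (m+j) * K (2*m) (2*m-j))) (M j))"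
  proof (rule sum.cong)
    fix j assume "j \<in> {..m}"
    then have j: "j \<le> m" by simp
    have "Zp^m * (Am^(2*m-(j+m)) * Bp^(2*m-(3*m-(j+m)))) = M j"
    proof -
      have "Zp^m * (Am^(2*m-(j+m)) * Bp^(2*m-(3*m-(j+m)))) = (Am^m * Am^(m-j)) * (Bp^m * Bp^j)"
        using j by (simp add: Zp_AB power_mult_distrib algebra_simps)
      also have "\<dots> = M j" unfolding M_def power_add[symmetric] using j by (simp add: mult_2)
      finally show ?thesis .
    qed
    then show "g (j+m) = smult (of_nat ((3*m choose (m+j)) * K (2*m) (m+j) * K (2*m) (2*m-j))) (M j)"
      using j by (simp add: g_def add.commute)
  qed (auto simp: atLeast0AtMost)
  finally have R: "Zp^m * (pderiv^^(3*m)) (Zp^(2*m)) = (\<Sum>j\<le>m. smult (of_nat ((3*m choose (m+j)) * K (2*m) (m+j) * K (2*m) (2*m-j))) (M j))"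
    using R0 by simp
  show ?thesis unfolding L R smult_sum_right smult_smult
  proof (intro sum.cong refl)
    fix j assume "j \<in> {..m}"
    then have j: "j \<le> m" by simp
    show "smult (of_nat (fact (3*m)) * of_nat ((m choose j) * K (2*m) j * K (2*m) (m-j))) (M j) =
          smult (of_nat (fact m) * of_nat ((3*m choose (m+j)) * K (2*m) (m+j) * K (2*m) (2*m-j))) (M j)"
      using arg_cong[OF legendre_num[OF j], of "of_nat :: nat \<Rightarrow> int"] by (simp only: of_nat_mult)
  qed
qed



lemma poch_fact: "pochhammer (of_nat (Suc x)) n * (fact x :: int) = fact (x + n)"
proof (induction n)
  case 0 then show ?case by simp
next
  case (Suc n)
  have "pochhammer (of_nat (Suc x)) (Suc n) * (fact x::int) = (pochhammer (of_nat (Suc x)) n * fact x) * (of_nat (Suc x) + of_nat n)"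
    by (simp add: pochhammer_Suc algebra_simps)
  also have "\<dots> = fact (x+n) * of_nat (Suc (x+n))" using Suc.IH by simp
  also have "\<dots> = fact (x + Suc n)" by (simp only: add_Suc_right fact_Suc) (simp add: algebra_simps)
  finally show ?case .
qed

lemma poch_ndvd:
  assumes "prime p" "x + n < p"
  shows "\<not> int p dvd pochhammer (of_nat (Suc x)) n"
proof
  assume "int p dvd pochhammer (of_nat (Suc x)) n"
  then have "int p dvd pochhammer (of_nat (Suc x)) n * (fact x :: int)" by simp
  then have "int p dvd (fact (x + n) :: int)" unfolding poch_fact .
  then have "int p dvd int (fact (x + n))" by (simp only: of_nat_fact)
  then have "p dvd fact (x+n)" by (simp only: int_dvd_int_iff)
  with assms show False by (simp add: prime_dvd_fact_iff)
qed

lemma fact_ndvd: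
  assumes "prime p" "x < p"
  shows "\<not> int p dvd int (fact x)"
  using assms by (simp only: int_dvd_int_iff) (simp add: prime_dvd_fact_iff)

lemma T3_ndvd:
  assumes "prime p" "n < p" "a + b + c \<le> n"
  shows "\<not> int p dvd int (T3 n a b c)"
proof
  assume "int p dvd int (T3 n a b c)"
  then have "p dvd T3 n a b c" by simp
  then have "p dvd fact n" using T3_fact[OF assms(3)] by (metis dvd_mult2)
  with assms show False by (simp add: prime_dvd_fact_iff)
qed

lemma inverse_mod:
  assumes "prime (P::int)" "\<not> P dvd x"
  obtains y where "P dvd (1 - x*y)"
proof -
  have "coprime x P" using assms by (meson coprime_commute prime_imp_coprime)
  then obtain y where "[x*y = 1] (mod P)" using cong_solve_coprime_int by blast
  then have "P dvd (1 - x*y)" by (metis cong_iff_dvd_diff cong_sym)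
  then show ?thesis using that by blast
qed

lemma poly_cong_dvd:
  fixes P a b :: int
  assumes "\<And>n. [coeff A n * b = coeff B n * a] (mod P)"
  shows "[:P:] dvd ([:b:] * A - [:a:] * B)"
  unfolding const_poly_dvd_iff
proof
  fix n
  have "P dvd (coeff A n * b - coeff B n * a)" using assms[of n] by (simp add: cong_iff_dvd_diff)
  then show "P dvd coeff ([:b:] * A - [:a:] * B) n" by (simp add: algebra_simps)
qed

lemma const_dvd: "(P::int) dvd (1 - x) \<Longrightarrow> [:P:] dvd (1 - [:x:])"
proof -
  assume "P dvd (1 - x)"
  then have "[:P:] dvd [:1 - x:]" by (simp add: const_poly_dvd_iff coeff_pCons split: nat.splits)
  moreover have "[:1 - x:] = 1 - [:x:]" by (simp add: one_pCons)
  ultimately show ?thesis by simp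
qed

lemma tele:
  fixes c1 c3 E1 E3 V A3 W FM II B1 B3 F3 A1 Z :: "'a::comm_ring_1"
  shows "c3 - c1*(V*A3*W*FM*II*B1*Z) = (1 - V*B3)*c3 + V*(B3*c3 - A3*E3) + V*A3*(1-W*F3)*E3
     + V*A3*W*(F3*E3 - FM*(Z*E1)) + V*A3*W*FM*Z*(1-II*A1)*E1 + V*A3*W*FM*II*Z*(A1*E1 - B1*c1)"
  by (simp add: algebra_simps)

lemma part1:
  assumes "prime (6*m+1)"
  shows "\<exists>q :: int poly. \<forall>i. [coeff (c3 (6*m+1)) i = coeff (c1 (6*m+1) * q) i] (mod int (6*m+1))"
proof -
  define P where "P = int (6*m+1)"
  have pI: "prime (int (6*m+1))" using assms by (simp only: prime_nat_int_transfer)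
  have pP: "prime P" unfolding P_def using assms by (simp only: prime_nat_int_transfer)
  define E1 where "E1 = (pderiv^^(3*m)) (Zp^(2*m))"
  define E3 where "E3 = (pderiv^^m) (Zp^(2*m))"
  define b1 where "b1 = coeff E1 m"
  define a1 where "a1 = int (T3 (6*m) (4*m) m m)"
  define b3 where "b3 = coeff E3 (3*m)"
  define a3 where "a3 = int (T3 (6*m) (2*m) 0 (3*m))"
  define F3 where "F3 = int (fact (3*m))"
  define FM where "FM = int (fact m)"
  have H1: "[:P:] dvd ([:b1:] * c1 (6*m+1) - [:a1:] * E1)"
    unfolding P_def E1_def b1_def a1_def by (rule poly_cong_dvd, rule c1_cong[OF pI])
  have H3: "[:P:] dvd ([:b3:] * c3 (6*m+1) - [:a3:] * E3)"
    unfolding P_def E3_def b3_def a3_def by (rule poly_cong_dvd, rule c3_cong[OF pI])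
  have HL: "[:F3:] * E3 - [:FM:] * (Zp^m * E1) = 0"
    using legendre[of m] by (simp add: F3_def FM_def E1_def E3_def)
  have b3v: "b3 = pochhammer (of_nat (Suc (3*m))) m"
    by (simp add: b3_def E3_def coeff_higher_pderiv coeff_Zpow)
  have nb3: "\<not> P dvd b3" unfolding b3v P_def by (rule poch_ndvd) (use assms in auto)
  have na1: "\<not> P dvd a1" unfolding a1_def P_def by (rule T3_ndvd) (use assms in auto)
  have nF3: "\<not> P dvd F3" unfolding F3_def P_def by (rule fact_ndvd) (use assms in auto)
  obtain v where v: "P dvd (1 - b3*v)" using inverse_mod[OF pP nb3] by blast
  obtain w where w: "P dvd (1 - F3*w)" using inverse_mod[OF pP nF3] by blast
  obtain ii where ii: "P dvd (1 - a1*ii)" using inverse_mod[OF pP na1] by blast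
  define q where "q = [:v:]*[:a3:]*[:w:]*[:FM:]*[:ii:]*[:b1:]*Zp^m"
  have T: "c3 (6*m+1) - c1 (6*m+1) * q =
       (1 - [:v:]*[:b3:])*c3 (6*m+1) + [:v:]*([:b3:]*c3 (6*m+1) - [:a3:]*E3) + [:v:]*[:a3:]*(1-[:w:]*[:F3:])*E3
     + [:v:]*[:a3:]*[:w:]*([:F3:]*E3 - [:FM:]*(Zp^m*E1)) + [:v:]*[:a3:]*[:w:]*[:FM:]*Zp^m*(1-[:ii:]*[:a1:])*E1
     + [:v:]*[:a3:]*[:w:]*[:FM:]*[:ii:]*Zp^m*([:a1:]*E1 - [:b1:]*c1 (6*m+1))"
    unfolding q_def by (rule tele)
  have d1: "[:P:] dvd (1 - [:v:]*[:b3:])"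
    using const_dvd[of P "b3*v"] v by (simp add: mult.commute)
  have d2: "[:P:] dvd (1-[:w:]*[:F3:])"
    using const_dvd[of P "F3*w"] w by (simp add: mult.commute)
  have d3: "[:P:] dvd (1-[:ii:]*[:a1:])"
    using const_dvd[of P "a1*ii"] ii by (simp add: mult.commute)
  have d4: "[:P:] dvd ([:a1:]*E1 - [:b1:]*c1 (6*m+1))"
  proof -
    have "[:a1:]*E1 - [:b1:]*c1 (6*m+1) = - ([:b1:] * c1 (6*m+1) - [:a1:] * E1)" by simp
    then show ?thesis using H1 by (metis dvd_minus_iff)
  qed
  have D: "[:P:] dvd (c3 (6*m+1) - c1 (6*m+1) * q)"
  proof -
    have t1: "[:P:] dvd (1 - [:v:]*[:b3:])*c3 (6*m+1)" using d1 by (rule dvd_mult2)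
    have t2: "[:P:] dvd [:v:]*([:b3:]*c3 (6*m+1) - [:a3:]*E3)" using H3 by (rule dvd_mult)
    have t3: "[:P:] dvd [:v:]*[:a3:]*(1-[:w:]*[:F3:])*E3" using d2 by (intro dvd_mult2 dvd_mult)
    have t4: "[:P:] dvd [:v:]*[:a3:]*[:w:]*([:F3:]*E3 - [:FM:]*(Zp^m*E1))" unfolding HL by simp
    have t5: "[:P:] dvd [:v:]*[:a3:]*[:w:]*[:FM:]*Zp^m*(1-[:ii:]*[:a1:])*E1" using d3 by (intro dvd_mult2 dvd_mult)
    have t6: "[:P:] dvd [:v:]*[:a3:]*[:w:]*[:FM:]*[:ii:]*Zp^m*([:a1:]*E1 - [:b1:]*c1 (6*m+1))" using d4 by (rule dvd_mult)
    show ?thesis unfolding T by (intro dvd_add t1 t2 t3 t4 t5 t6)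
  qed
  show ?thesis
  proof (intro exI allI)
    fix i
    have "P dvd coeff (c3 (6*m+1) - c1 (6*m+1) * q) i" using D by (simp add: const_poly_dvd_iff)
    then show "[coeff (c3 (6*m+1)) i = coeff (c1 (6*m+1) * q) i] (mod int (6*m+1))"
      by (simp add: cong_iff_dvd_diff P_def)
  qed
qed



lemma map_poly_of_int_add:
  "map_poly (of_int::int\<Rightarrow>'a::comm_ring_1) (p + q) = map_poly of_int p + map_poly of_int q"
  by (intro poly_eqI) (simp add: coeff_map_poly)

lemma map_poly_of_int_mult:
  "map_poly (of_int::int\<Rightarrow>'a::comm_ring_1) (p * q) = map_poly of_int p * map_poly of_int q"
proof (induction p rule: pCons_induct)
  case 0 then show ?case by simp
next
  case (pCons a p)
  have "map_poly (of_int::int\<Rightarrow>'a) (pCons a p * q) = map_poly of_int (smult a q) + map_poly of_int (pCons 0 (p * q))"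
    by (simp add: map_poly_of_int_add)
  also have "\<dots> = smult (of_int a) (map_poly of_int q) + pCons 0 (map_poly of_int p * map_poly of_int q)"
    using pCons.IH by (simp add: map_poly_smult map_poly_pCons)
  also have "\<dots> = pCons (of_int a) (map_poly of_int p) * map_poly (of_int::int\<Rightarrow>'a) q" by simp
  also have "\<dots> = map_poly of_int (pCons a p) * map_poly (of_int::int\<Rightarrow>'a) q" by (simp add: map_poly_pCons)
  finally show ?case .
qed

lemma map_poly_of_int_power:
  "map_poly (of_int::int\<Rightarrow>'a::comm_ring_1) (p ^ n) = (map_poly of_int p) ^ n"
  by (induction n) (simp_all add: map_poly_of_int_mult)

lemma part2:
  fixes r :: "'a :: field"
  assumes "prime (6*m+1)" "CHAR('a) = 6*m+1" "m \<ge> 1"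
  shows "poly (map_poly of_int (c2 (6*m+1))) r = 0 \<longleftrightarrow> r = 2 \<or> r = - 2"
proof -
  define P where "P = int (6*m+1)"
  have pI: "prime (int (6*m+1))" using assms by (simp only: prime_nat_int_transfer)
  define a2 where "a2 = int (T3 (6*m) (2*m) (2*m) (2*m))"
  have eqc: "(of_int x :: 'a) = of_int y" if "[x = y] (mod P)" for x y
  proof -
    have "P dvd (x - y)" using that by (simp add: cong_iff_dvd_diff)
    then have "int CHAR('a) dvd (x - y)" unfolding P_def assms(2) .
    then have "(of_int (x - y) :: 'a) = 0" by (simp only: of_int_eq_0_iff_char_dvd)
    then show ?thesis by simp
  qed
  have M: "map_poly (of_int::int\<Rightarrow>'a) (c2 (6*m+1)) = smult (of_int a2) (map_poly of_int (Zp^m))"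
  proof (rule poly_eqI)
    fix e
    have "(of_int (coeff (c2 (6*m+1)) e) :: 'a) = of_int (a2 * coeff (Zp^m) e)"
      using eqc c2_cong[OF pI, of e] unfolding a2_def P_def by blast
    then show "coeff (map_poly (of_int::int\<Rightarrow>'a) (c2 (6*m+1))) e = coeff (smult (of_int a2) (map_poly of_int (Zp^m))) e"
      by (simp add: coeff_map_poly)
  qed
  have Z: "map_poly (of_int::int\<Rightarrow>'a) Zp = [:-4, 0, 1:]" by (simp add: Zp_def map_poly_pCons)
  have val: "poly (map_poly of_int (c2 (6*m+1))) r = of_int a2 * ((r - 2) * (r + 2)) ^ m"
  proof -
    have "poly (map_poly of_int (c2 (6*m+1))) r = of_int a2 * (r*r - 4) ^ m"
      unfolding M map_poly_of_int_power Z by (simp add: poly_power algebra_simps)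
    also have "r*r - 4 = (r - 2) * (r + 2)" by (simp add: algebra_simps)
    finally show ?thesis .
  qed
  have na2: "(of_int a2 :: 'a) \<noteq> 0"
  proof
    assume "(of_int a2 :: 'a) = 0"
    then have "int CHAR('a) dvd a2" by (simp only: of_int_eq_0_iff_char_dvd)
    then have "int (6*m+1) dvd a2" unfolding assms(2) .
    moreover have "\<not> int (6*m+1) dvd a2" unfolding a2_def by (rule T3_ndvd) (use assms in auto)
    ultimately show False by blast
  qed
  show ?thesis
    unfolding val using na2 assms(3)
    by (auto simp: power_eq_0_iff eq_neg_iff_add_eq_0)
qed

theorem proposition3p8:
  fixes p :: nat
  assumes "prime p" and "p \<ge> 5" and "[p = 1] (mod 6)"
  shows "(\<exists>q :: int poly. \<forall>i. [coeff (c3 p) i = coeff (c1 p * q) i] (mod int p))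
       \<and> (\<forall>r :: 'a :: field. CHAR('a) = p \<longrightarrow>
            (poly (map_poly of_int (c2 p)) r = 0 \<longleftrightarrow> r = 2 \<or> r = - 2))"
proof -
  define m where "m = p div 6"
  have "p mod 6 = 1" using assms(3) by (simp add: cong_def)
  then have pm: "p = 6*m+1" unfolding m_def by presburger
  have m1: "m \<ge> 1" using assms(2) pm by simp
  have pr: "prime (6*m+1)" using assms(1) pm by simp
  show ?thesis
    unfolding pm using part1[OF pr] part2[OF pr _ m1] by blast
qed


end
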